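(* Let $\omega\ge2$ and let $\Gamma$ be a finite simple graph on $n$ vertices that is $k$-regular and $\omega$-clique regular, whose smallest adjacency eigenvalue $\lambda_1$ has multiplicity $a_1$. Then $\lambda_1\ge\frac{-k}{\omega-1}$. If moreover $k<\omega(\omega-1)$, then $\lambda_1=\frac{-k}{\omega-1}$ and $a_1\ge n-\frac{nk}{\omega(\omega-1)}$.
   Context: A graph is $\omega$-clique regular if it has a nonempty edge set and every edge lies in exactly one clique of order $\omega$. *)

theory Defs
  imports "Jordan_Normal_Form.Char_Poly"
begin

text \<open>A finite simple graph on the vertex set {0..<n} is given by a symmetric,
irreflexive adjacency relation E (only its restriction to {0..<n} matters).\<close>

definition simple_graph :: "nat \<Rightarrow> (nat \<Rightarrow> nat \<Rightarrow> bool) \<Rightarrow> bool" where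
  "simple_graph n E \<longleftrightarrow> (\<forall>u<n. \<forall>v<n. E u v \<longleftrightarrow> E v u) \<and> (\<forall>v<n. \<not> E v v)"

definition k_regular :: "nat \<Rightarrow> (nat \<Rightarrow> nat \<Rightarrow> bool) \<Rightarrow> nat \<Rightarrow> bool" where
  "k_regular n E k \<longleftrightarrow> (\<forall>v<n. card {u. u < n \<and> E v u} = k)"

definition is_clique :: "nat \<Rightarrow> (nat \<Rightarrow> nat \<Rightarrow> bool) \<Rightarrow> nat set \<Rightarrow> bool" where
  "is_clique n E C \<longleftrightarrow> C \<subseteq> {0..<n} \<and> (\<forall>u\<in>C. \<forall>v\<in>C. u \<noteq> v \<longrightarrow> E u v)"

definition clique_regular :: "nat \<Rightarrow> (nat \<Rightarrow> nat \<Rightarrow> bool) \<Rightarrow> nat \<Rightarrow> bool" where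
  "clique_regular n E \<omega> \<longleftrightarrow>
     (\<exists>u<n. \<exists>v<n. E u v) \<and>
     (\<forall>u<n. \<forall>v<n. E u v \<longrightarrow>
        (\<exists>!C. is_clique n E C \<and> card C = \<omega> \<and> u \<in> C \<and> v \<in> C))"

definition adj_matrix :: "nat \<Rightarrow> (nat \<Rightarrow> nat \<Rightarrow> bool) \<Rightarrow> real mat" where
  "adj_matrix n E = mat n n (\<lambda>(i, j). if E i j then 1 else 0)"

text \<open>lambda is the smallest adjacency eigenvalue (eigenvalues of a real symmetric matrix are real).\<close>
definition smallest_eigenvalue :: "real mat \<Rightarrow> real \<Rightarrow> bool" where
  "smallest_eigenvalue A lam \<longleftrightarrow> eigenvalue A lam \<and> (\<forall>mu. eigenvalue A mu \<longrightarrow> lam \<le> mu)"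

definition eig_multiplicity :: "real mat \<Rightarrow> real \<Rightarrow> nat" where
  "eig_multiplicity A lam = order lam (char_poly A)"

end

theory Submission imports Defs "Jordan_Normal_Form.Jordan_Normal_Form_Existence" "Jordan_Normal_Form.Jordan_Normal_Form_Uniqueness" begin

interpretation ofr: map_poly_inj_idom_divide_hom "of_real :: real \<Rightarrow> complex" ..

definition Cl :: "nat \<Rightarrow> (nat \<Rightarrow> nat \<Rightarrow> bool) \<Rightarrow> nat \<Rightarrow> nat set set" where
  "Cl n E w = {C. is_clique n E C \<and> card C = w}"

lemma Cl_sub: "C \<in> Cl n E w \<Longrightarrow> C \<subseteq> {0..<n}"
  by (auto simp: Cl_def is_clique_def)

lemma fin_Cl: "finite (Cl n E w)"
proof -
  have "Cl n E w \<subseteq> Pow {0..<n}" using Cl_sub by blast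
  then show ?thesis by (rule finite_subset) simp
qed

lemma pair_count:
  assumes cr: "clique_regular n E w" and i: "i < n" and j: "j < n" and ij: "i \<noteq> j"
  shows "card {C \<in> Cl n E w. i \<in> C \<and> j \<in> C} = (if E i j then 1 else 0)"
proof (cases "E i j")
  case True
  have "\<exists>!C. is_clique n E C \<and> card C = w \<and> i \<in> C \<and> j \<in> C"
    using cr i j True unfolding clique_regular_def by blast
  then obtain C where C: "is_clique n E C \<and> card C = w \<and> i \<in> C \<and> j \<in> C"
    and uq: "\<And>C'. is_clique n E C' \<and> card C' = w \<and> i \<in> C' \<and> j \<in> C' \<Longrightarrow> C' = C"
    by auto
  have "{C \<in> Cl n E w. i \<in> C \<and> j \<in> C} = {C}"
    using C uq unfolding Cl_def by blast
  then show ?thesis using True by simp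
next
  case False
  have "{C \<in> Cl n E w. i \<in> C \<and> j \<in> C} = {}"
    using False ij by (auto simp: Cl_def is_clique_def)
  then show ?thesis using False by (metis card.empty)
qed

lemma swap_count:
  fixes g :: "nat \<Rightarrow> 'a::comm_semiring_1"
  shows "(\<Sum>C\<in>{C \<in> Cl n E w. i \<in> C}. \<Sum>j\<in>C. g j)
       = (\<Sum>j\<in>{0..<n}. of_nat (card {C \<in> Cl n E w. i \<in> C \<and> j \<in> C}) * g j)"
proof -
  let ?S = "{C \<in> Cl n E w. i \<in> C}"
  have fS: "finite ?S" using fin_Cl by simp
  have "(\<Sum>C\<in>?S. \<Sum>j\<in>C. g j) = (\<Sum>C\<in>?S. \<Sum>j\<in>{0..<n}. if j \<in> C then g j else 0)"
  proof (rule sum.cong[OF refl])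
    fix C assume "C \<in> ?S"
    then have "C \<subseteq> {0..<n}" using Cl_sub by blast
    then have "{0..<n} \<inter> C = C" by blast
    then show "(\<Sum>j\<in>C. g j) = (\<Sum>j\<in>{0..<n}. if j \<in> C then g j else 0)"
      using sum.inter_restrict[of "{0..<n}" g C] by simp
  qed
  also have "\<dots> = (\<Sum>j\<in>{0..<n}. \<Sum>C\<in>?S. if j \<in> C then g j else 0)"
    by (rule sum.swap)
  also have "\<dots> = (\<Sum>j\<in>{0..<n}. of_nat (card {C \<in> Cl n E w. i \<in> C \<and> j \<in> C}) * g j)"
  proof (rule sum.cong[OF refl])
    fix j
    have "(\<Sum>C\<in>?S. if j \<in> C then g j else 0) = (\<Sum>C\<in>{C\<in>?S. j \<in> C}. g j)"
      using fS sum.inter_filter[OF fS, where P="\<lambda>C. j \<in> C" and g="\<lambda>_. g j"] by simp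
    also have "{C\<in>?S. j \<in> C} = {C \<in> Cl n E w. i \<in> C \<and> j \<in> C}" by auto
    finally show "(\<Sum>C\<in>?S. if j \<in> C then g j else 0) = of_nat (card {C \<in> Cl n E w. i \<in> C \<and> j \<in> C}) * g j"
      by simp
  qed
  finally show ?thesis .
qed


lemma Cl_finite_mem: "C \<in> Cl n E w \<Longrightarrow> finite C"
  using Cl_sub[of C n E w] finite_subset[of C "{0..<n}"] by simp

lemma Cl_card: "C \<in> Cl n E w \<Longrightarrow> card C = w"
  by (simp add: Cl_def)

lemma lin_id:
  fixes g :: "nat \<Rightarrow> 'a::comm_semiring_1"
  assumes sg: "simple_graph n E" and cr: "clique_regular n E w" and i: "i < n"
  shows "(\<Sum>C\<in>{C \<in> Cl n E w. i \<in> C}. \<Sum>j\<in>C. g j)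
       = of_nat (card {C \<in> Cl n E w. i \<in> C}) * g i + (\<Sum>j\<in>{0..<n}. (if E i j then 1 else 0) * g j)"
proof -
  let ?c = "\<lambda>j. card {C \<in> Cl n E w. i \<in> C \<and> j \<in> C}"
  have fin: "finite {0..<n}" by simp
  have im: "i \<in> {0..<n}" using i by simp
  have "(\<Sum>C\<in>{C \<in> Cl n E w. i \<in> C}. \<Sum>j\<in>C. g j) = (\<Sum>j\<in>{0..<n}. of_nat (?c j) * g j)"
    by (rule swap_count)
  also have "\<dots> = of_nat (?c i) * g i + (\<Sum>j\<in>{0..<n} - {i}. of_nat (?c j) * g j)"
    using sum.remove[OF fin im] by blast
  also have "(\<Sum>j\<in>{0..<n} - {i}. of_nat (?c j) * g j) = (\<Sum>j\<in>{0..<n} - {i}. (if E i j then 1 else 0) * g j)"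
  proof (rule sum.cong[OF refl])
    fix j assume "j \<in> {0..<n} - {i}"
    then have "j < n" "i \<noteq> j" by auto
    then show "of_nat (?c j) * g j = (if E i j then 1 else 0) * g j"
      using pair_count[OF cr i] by simp
  qed
  also have "\<dots> = (\<Sum>j\<in>{0..<n}. (if E i j then 1 else 0) * g j)"
  proof -
    have "\<not> E i i" using sg i by (simp add: simple_graph_def)
    then show ?thesis using sum.remove[OF fin im, of "\<lambda>j. (if E i j then 1 else 0) * g j"] by simp
  qed
  also have "?c i = card {C \<in> Cl n E w. i \<in> C}" by simp
  finally show ?thesis .
qed

lemma vertex_count:
  assumes sg: "simple_graph n E" and kr: "k_regular n E k" and cr: "clique_regular n E w"
    and i: "i < n"
  shows "card {C \<in> Cl n E w. i \<in> C} * (w - 1) = k"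
proof -
  let ?g = "\<lambda>j. if j = i then 0 else (1::nat)"
  let ?S = "{C \<in> Cl n E w. i \<in> C}"
  have "(\<Sum>C\<in>?S. \<Sum>j\<in>C. ?g j) = (\<Sum>C\<in>?S. w - 1)"
  proof (rule sum.cong[OF refl])
    fix C assume C: "C \<in> ?S"
    then have fC: "finite C" and iC: "i \<in> C" and cC: "card C = w"
      using Cl_finite_mem Cl_card by auto
    have "(\<Sum>j\<in>C. ?g j) = ?g i + (\<Sum>j\<in>C - {i}. ?g j)" using sum.remove[OF fC iC] by blast
    also have "(\<Sum>j\<in>C - {i}. ?g j) = (\<Sum>j\<in>C - {i}. 1)" by (rule sum.cong) auto
    finally show "(\<Sum>j\<in>C. ?g j) = w - 1" using cC fC iC by simp
  qed
  also have "\<dots> = card ?S * (w - 1)" by simp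
  finally have L: "(\<Sum>C\<in>?S. \<Sum>j\<in>C. ?g j) = card ?S * (w - 1)" .
  have "(\<Sum>C\<in>?S. \<Sum>j\<in>C. ?g j) = of_nat (card ?S) * ?g i + (\<Sum>j\<in>{0..<n}. (if E i j then 1 else 0) * ?g j)"
    by (rule lin_id[OF sg cr i])
  also have "\<dots> = (\<Sum>j\<in>{0..<n}. (if E i j then 1 else 0))"
  proof -
    have "(\<Sum>j\<in>{0..<n}. (if E i j then 1 else 0) * ?g j) = (\<Sum>j\<in>{0..<n}. (if E i j then 1 else 0))"
      using sg i by (intro sum.cong) (auto simp: simple_graph_def)
    then show ?thesis by simp
  qed
  also have "\<dots> = (\<Sum>j\<in>{j \<in> {0..<n}. E i j}. 1)"
    by (rule sum.inter_filter[symmetric]) simp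
  also have "\<dots> = card {j \<in> {0..<n}. E i j}" by simp
  also have "{j \<in> {0..<n}. E i j} = {u. u < n \<and> E i u}" by auto
  also have "card \<dots> = k" using kr i by (simp add: k_regular_def)
  finally show ?thesis using L by simp
qed

lemma double_count:
  shows "(\<Sum>i\<in>{0..<n}. card {C \<in> Cl n E w. i \<in> C}) = card (Cl n E w) * w"
proof -
  have "(\<Sum>i\<in>{0..<n}. card {C \<in> Cl n E w. i \<in> C}) = (\<Sum>i\<in>{0..<n}. \<Sum>C\<in>Cl n E w. if i \<in> C then 1 else (0::nat))"
  proof (rule sum.cong[OF refl])
    fix i
    have "card {C \<in> Cl n E w. i \<in> C} = (\<Sum>C\<in>{C \<in> Cl n E w. i \<in> C}. (1::nat))" by simp
    also have "\<dots> = (\<Sum>C\<in>Cl n E w. if i \<in> C then 1 else (0::nat))"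
      by (rule sum.inter_filter[OF fin_Cl])
    finally show "card {C \<in> Cl n E w. i \<in> C} = (\<Sum>C\<in>Cl n E w. if i \<in> C then 1 else (0::nat))" .
  qed
  also have "\<dots> = (\<Sum>C\<in>Cl n E w. \<Sum>i\<in>{0..<n}. if i \<in> C then 1 else (0::nat))"
    by (rule sum.swap)
  also have "\<dots> = (\<Sum>C\<in>Cl n E w. w)"
  proof (rule sum.cong[OF refl])
    fix C assume C: "C \<in> Cl n E w"
    then have "{0..<n} \<inter> C = C" using Cl_sub by blast
    then show "(\<Sum>i\<in>{0..<n}. if i \<in> C then 1 else (0::nat)) = w"
      using sum.inter_restrict[of "{0..<n}" "\<lambda>_. 1::nat" C] Cl_card[OF C] by simp
  qed
  finally show ?thesis by simp
qed


lemma quad_swap: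
  fixes f T :: "_ \<Rightarrow> 'a::comm_semiring_1"
  shows "(\<Sum>i\<in>{0..<n}. f i * (\<Sum>C\<in>{C \<in> Cl n E w. i \<in> C}. T C))
       = (\<Sum>C\<in>Cl n E w. T C * (\<Sum>i\<in>C. f i))"
proof -
  have "(\<Sum>i\<in>{0..<n}. f i * (\<Sum>C\<in>{C \<in> Cl n E w. i \<in> C}. T C))
      = (\<Sum>i\<in>{0..<n}. \<Sum>C\<in>Cl n E w. if i \<in> C then f i * T C else 0)"
  proof (rule sum.cong[OF refl])
    fix i
    have "f i * (\<Sum>C\<in>{C \<in> Cl n E w. i \<in> C}. T C) = (\<Sum>C\<in>{C \<in> Cl n E w. i \<in> C}. f i * T C)"
      by (simp add: sum_distrib_left)
    also have "\<dots> = (\<Sum>C\<in>Cl n E w. if i \<in> C then f i * T C else 0)"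
      by (rule sum.inter_filter[OF fin_Cl])
    finally show "f i * (\<Sum>C\<in>{C \<in> Cl n E w. i \<in> C}. T C) = (\<Sum>C\<in>Cl n E w. if i \<in> C then f i * T C else 0)" .
  qed
  also have "\<dots> = (\<Sum>C\<in>Cl n E w. \<Sum>i\<in>{0..<n}. if i \<in> C then f i * T C else 0)"
    by (rule sum.swap)
  also have "\<dots> = (\<Sum>C\<in>Cl n E w. T C * (\<Sum>i\<in>C. f i))"
  proof (rule sum.cong[OF refl])
    fix C assume C: "C \<in> Cl n E w"
    then have e: "{0..<n} \<inter> C = C" using Cl_sub by blast
    have "(\<Sum>i\<in>{0..<n}. if i \<in> C then f i * T C else 0) = (\<Sum>i\<in>{0..<n} \<inter> C. f i * T C)"
      by (rule sum.inter_restrict[symmetric]) simp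
    also have "\<dots> = (\<Sum>i\<in>C. f i * T C)" using e by simp
    also have "\<dots> = T C * (\<Sum>i\<in>C. f i)" by (simp add: sum_distrib_left mult.commute)
    finally show "(\<Sum>i\<in>{0..<n}. if i \<in> C then f i * T C else 0) = T C * (\<Sum>i\<in>C. f i)" .
  qed
  finally show ?thesis .
qed

lemma adj_carrier: "adj_matrix n E \<in> carrier_mat n n"
  by (simp add: adj_matrix_def)

lemma adj_mult:
  assumes "v \<in> carrier_vec n" "i < n"
  shows "(adj_matrix n E *\<^sub>v v) $ i = (\<Sum>j\<in>{0..<n}. (if E i j then 1 else 0) * v $ j)"
  using assms by (simp add: adj_matrix_def scalar_prod_def)

lemma eig_lower:
  assumes sg: "simple_graph n E" and cr: "clique_regular n E w"
    and d: "\<And>i. i < n \<Longrightarrow> card {C \<in> Cl n E w. i \<in> C} = d"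
    and ev: "eigenvalue (adj_matrix n E) mu"
  shows "- real d \<le> mu"
proof -
  from ev obtain v where v: "v \<in> carrier_vec n" and v0: "v \<noteq> 0\<^sub>v n"
    and Av: "adj_matrix n E *\<^sub>v v = mu \<cdot>\<^sub>v v"
    unfolding eigenvalue_def eigenvector_def by (auto simp: adj_matrix_def)
  have S: "(\<Sum>C\<in>{C \<in> Cl n E w. i \<in> C}. \<Sum>j\<in>C. v $ j) = (real d + mu) * v $ i" if i: "i < n" for i
  proof -
    have "(\<Sum>C\<in>{C \<in> Cl n E w. i \<in> C}. \<Sum>j\<in>C. v $ j)
        = of_nat (card {C \<in> Cl n E w. i \<in> C}) * v $ i + (\<Sum>j\<in>{0..<n}. (if E i j then 1 else 0) * v $ j)"
      by (rule lin_id[OF sg cr i])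
    also have "(\<Sum>j\<in>{0..<n}. (if E i j then 1 else 0) * v $ j) = (adj_matrix n E *\<^sub>v v) $ i"
      using adj_mult[OF v i] by simp
    also have "\<dots> = mu * v $ i" using Av v i by simp
    finally show ?thesis using d[OF i] by (simp add: algebra_simps)
  qed
  have "(\<Sum>i\<in>{0..<n}. v $ i * (\<Sum>C\<in>{C \<in> Cl n E w. i \<in> C}. \<Sum>j\<in>C. v $ j))
      = (\<Sum>C\<in>Cl n E w. (\<Sum>j\<in>C. v $ j) * (\<Sum>i\<in>C. v $ i))"
    by (rule quad_swap)
  also have "\<dots> \<ge> 0" by (intro sum_nonneg) simp
  finally have "0 \<le> (\<Sum>i\<in>{0..<n}. v $ i * ((real d + mu) * v $ i))"
    using S by simp
  also have "\<dots> = (real d + mu) * (\<Sum>i\<in>{0..<n}. (v $ i)^2)"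
    by (simp add: sum_distrib_left power2_eq_square algebra_simps)
  finally have P: "0 \<le> (real d + mu) * (\<Sum>i\<in>{0..<n}. (v $ i)^2)" .
  obtain i where i: "i < n" and vi: "v $ i \<noteq> 0"
    using v v0 by (metis carrier_vecD eq_vecI index_zero_vec(1) index_zero_vec(2))
  have "(v $ i)^2 \<le> (\<Sum>i\<in>{0..<n}. (v $ i)^2)"
    by (rule member_le_sum) (use i in auto)
  moreover have "(v $ i)^2 > 0" using vi by simp
  ultimately have "(\<Sum>i\<in>{0..<n}. (v $ i)^2) > 0" by linarith
  with P have "0 \<le> real d + mu" by (simp add: zero_le_mult_iff)
  then show ?thesis by simp
qed


lemma cm_mult:
  assumes v: "v \<in> carrier_vec n" and i: "i < n"
  shows "(char_matrix (map_mat complex_of_real (adj_matrix n E)) (- of_nat d) *\<^sub>v v) $ i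
     = (\<Sum>j\<in>{0..<n}. (if E i j then 1 else 0) * v $ j) + of_nat d * v $ i"
proof -
  have h1: "(\<Sum>ia\<in>{0..<n}. complex_of_nat d * (v $ ia * (if ia = i then 1 else 0))) = of_nat d * v $ i"
  proof -
    have "(\<Sum>ia\<in>{0..<n}. complex_of_nat d * (v $ ia * (if ia = i then 1 else 0)))
       = (\<Sum>ia\<in>{0..<n}. if ia = i then complex_of_nat d * v $ ia else 0)"
      by (rule sum.cong) auto
    then show ?thesis using i by simp
  qed
  have h2: "(\<Sum>ia\<in>{0..<n}. v $ ia * complex_of_real (if E i ia then 1 else 0))
     = (\<Sum>j\<in>{0..<n}. (if E i j then 1 else 0) * v $ j)"
    by (rule sum.cong) auto
  show ?thesis
    using v i apply (simp add: char_matrix_def adj_matrix_def scalar_prod_def sum.distrib algebra_simps)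
    apply (simp only: h1 h2)
    apply (simp add: algebra_simps)
    done
qed


lemma cm_carrier: "char_matrix (map_mat complex_of_real (adj_matrix n E)) e \<in> carrier_mat n n"
  by (simp add: adj_matrix_def)

lemma ker_M:
  assumes sg: "simple_graph n E" and cr: "clique_regular n E w"
    and d: "\<And>i. i < n \<Longrightarrow> card {C \<in> Cl n E w. i \<in> C} = d"
  shows "mat_kernel (char_matrix (map_mat complex_of_real (adj_matrix n E)) (- of_nat d))
     = {v \<in> carrier_vec n. \<forall>C\<in>Cl n E w. (\<Sum>j\<in>C. v $ j) = 0}"
proof -
  let ?M = "char_matrix (map_mat complex_of_real (adj_matrix n E)) (- of_nat d)"
  have S: "(?M *\<^sub>v v) $ i = (\<Sum>C\<in>{C \<in> Cl n E w. i \<in> C}. \<Sum>j\<in>C. v $ j)"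
    if v: "v \<in> carrier_vec n" and i: "i < n" for v i
  proof -
    have "(?M *\<^sub>v v) $ i = (\<Sum>j\<in>{0..<n}. (if E i j then 1 else 0) * v $ j) + of_nat d * v $ i"
      by (rule cm_mult[OF v i])
    also have "\<dots> = of_nat (card {C \<in> Cl n E w. i \<in> C}) * v $ i + (\<Sum>j\<in>{0..<n}. (if E i j then 1 else 0) * v $ j)"
      using d[OF i] by (simp only: add.commute)
    also have "\<dots> = (\<Sum>C\<in>{C \<in> Cl n E w. i \<in> C}. \<Sum>j\<in>C. v $ j)"
      by (rule lin_id[OF sg cr i, symmetric])
    finally show ?thesis .
  qed
  have iff: "?M *\<^sub>v v = 0\<^sub>v n \<longleftrightarrow> (\<forall>C\<in>Cl n E w. (\<Sum>j\<in>C. v $ j) = 0)" if v: "v \<in> carrier_vec n" for v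
  proof
    assume z: "?M *\<^sub>v v = 0\<^sub>v n"
    have Si: "(\<Sum>C\<in>{C \<in> Cl n E w. i \<in> C}. \<Sum>j\<in>C. v $ j) = 0" if i: "i < n" for i
    proof -
      have "(?M *\<^sub>v v) $ i = 0" unfolding z by (rule index_zero_vec(1)[OF i])
      then show ?thesis using S[OF v i] by metis
    qed
    have q: "(\<Sum>i\<in>{0..<n}. cnj (v $ i) * (\<Sum>C\<in>{C \<in> Cl n E w. i \<in> C}. \<Sum>j\<in>C. v $ j))
      = (\<Sum>C\<in>Cl n E w. (\<Sum>j\<in>C. v $ j) * (\<Sum>i\<in>C. cnj (v $ i)))"
      by (rule quad_swap)
    have X0: "(\<Sum>i\<in>{0..<n}. cnj (v $ i) * (\<Sum>C\<in>{C \<in> Cl n E w. i \<in> C}. \<Sum>j\<in>C. v $ j)) = 0"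
      by (rule sum.neutral) (use Si in auto)
    have "0 = (\<Sum>C\<in>Cl n E w. (\<Sum>j\<in>C. v $ j) * (\<Sum>i\<in>C. cnj (v $ i)))"
      using q X0 by simp
    also have "(\<Sum>C\<in>Cl n E w. (\<Sum>j\<in>C. v $ j) * (\<Sum>i\<in>C. cnj (v $ i)))
       = (\<Sum>C\<in>Cl n E w. complex_of_real ((cmod (\<Sum>j\<in>C. v $ j))\<^sup>2))"
    proof (rule sum.cong[OF refl])
      fix C
      have "(\<Sum>i\<in>C. cnj (v $ i)) = cnj (\<Sum>j\<in>C. v $ j)" by (rule cnj_sum[symmetric])
      then have "(\<Sum>j\<in>C. v $ j) * (\<Sum>i\<in>C. cnj (v $ i)) = (\<Sum>j\<in>C. v $ j) * cnj (\<Sum>j\<in>C. v $ j)"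
        by (rule arg_cong)
      also have "\<dots> = complex_of_real ((cmod (\<Sum>j\<in>C. v $ j))\<^sup>2)"
        by (rule complex_norm_square[symmetric])
      finally show "(\<Sum>j\<in>C. v $ j) * (\<Sum>i\<in>C. cnj (v $ i)) = complex_of_real ((cmod (\<Sum>j\<in>C. v $ j))\<^sup>2)" .
    qed
    also have "\<dots> = complex_of_real (\<Sum>C\<in>Cl n E w. (cmod (\<Sum>j\<in>C. v $ j))\<^sup>2)"
      by (rule of_real_sum[symmetric])
    finally have "complex_of_real (\<Sum>C\<in>Cl n E w. (cmod (\<Sum>j\<in>C. v $ j))\<^sup>2) = 0"
      by (rule sym)
    then have "(\<Sum>C\<in>Cl n E w. (cmod (\<Sum>j\<in>C. v $ j))\<^sup>2) = 0"
      by (simp only: of_real_eq_0_iff)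
    moreover have "\<And>C. C \<in> Cl n E w \<Longrightarrow> 0 \<le> (cmod (\<Sum>j\<in>C. v $ j))\<^sup>2" by simp
    ultimately have "\<forall>C\<in>Cl n E w. (cmod (\<Sum>j\<in>C. v $ j))\<^sup>2 = 0"
      using sum_nonneg_eq_0_iff[OF fin_Cl, where f="\<lambda>C. (cmod (\<Sum>j\<in>C. v $ j))\<^sup>2"] by blast
    then show "\<forall>C\<in>Cl n E w. (\<Sum>j\<in>C. v $ j) = 0" by simp
  next
    assume T: "\<forall>C\<in>Cl n E w. (\<Sum>j\<in>C. v $ j) = 0"
    show "?M *\<^sub>v v = 0\<^sub>v n"
    proof (rule eq_vecI)
      show "dim_vec (?M *\<^sub>v v) = dim_vec (0\<^sub>v n :: complex vec)" using carrier_matD(1)[OF cm_carrier[of n E "- of_nat d"]] by simp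
      fix i assume "i < dim_vec (0\<^sub>v n :: complex vec)"
      then have i: "i < n" by simp
      have "(\<Sum>C\<in>{C \<in> Cl n E w. i \<in> C}. \<Sum>j\<in>C. v $ j) = 0"
        by (rule sum.neutral) (use T in auto)
      then show "(?M *\<^sub>v v) $ i = 0\<^sub>v n $ i" using S[OF v i] i by simp
    qed
  qed
  show ?thesis
    unfolding mat_kernel[OF cm_carrier] using iff by blast
qed

lemma ker_N:
  assumes f: "bij_betw f {0..<c} (Cl n E w)"
  shows "mat_kernel (mat c n (\<lambda>(r, i). if i \<in> f r then 1 else 0) :: complex mat)
     = {v \<in> carrier_vec n. \<forall>C\<in>Cl n E w. (\<Sum>j\<in>C. v $ j) = 0}"
proof -
  let ?N = "mat c n (\<lambda>(r, i). if i \<in> f r then 1 else 0) :: complex mat"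
  have car: "?N \<in> carrier_mat c n" by simp
  have R: "(?N *\<^sub>v v) $ r = (\<Sum>j\<in>f r. v $ j)" if v: "v \<in> carrier_vec n" and r: "r < c" for v r
  proof -
    have fr: "f r \<in> Cl n E w" using f r by (auto simp: bij_betw_def)
    then have e: "{0..<n} \<inter> f r = f r" using Cl_sub by blast
    have "(?N *\<^sub>v v) $ r = (\<Sum>j\<in>{0..<n}. (if j \<in> f r then 1 else 0) * v $ j)"
      using v r by (simp add: scalar_prod_def mult.commute)
    also have "\<dots> = (\<Sum>j\<in>{0..<n}. if j \<in> f r then v $ j else 0)"
      by (rule sum.cong) auto
    also have "\<dots> = (\<Sum>j\<in>{0..<n} \<inter> f r. v $ j)"
      by (rule sum.inter_restrict[symmetric]) simp
    finally show ?thesis using e by simp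
  qed
  have iff: "?N *\<^sub>v v = 0\<^sub>v c \<longleftrightarrow> (\<forall>C\<in>Cl n E w. (\<Sum>j\<in>C. v $ j) = 0)" if v: "v \<in> carrier_vec n" for v
  proof
    assume z: "?N *\<^sub>v v = 0\<^sub>v c"
    show "\<forall>C\<in>Cl n E w. (\<Sum>j\<in>C. v $ j) = 0"
    proof
      fix C assume "C \<in> Cl n E w"
      then obtain r where r: "r < c" and C: "C = f r" using f
        by (metis atLeastLessThan_iff bij_betw_iff_bijections)
      have "(?N *\<^sub>v v) $ r = 0" using z r by simp
      then show "(\<Sum>j\<in>C. v $ j) = 0" using R[OF v r] C by simp
    qed
  next
    assume T: "\<forall>C\<in>Cl n E w. (\<Sum>j\<in>C. v $ j) = 0"
    show "?N *\<^sub>v v = 0\<^sub>v c"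
    proof (rule eq_vecI)
      show "dim_vec (?N *\<^sub>v v) = dim_vec (0\<^sub>v c :: complex vec)" by simp
      fix r assume "r < dim_vec (0\<^sub>v c :: complex vec)"
      then have r: "r < c" by simp
      have "f r \<in> Cl n E w" using f r by (auto simp: bij_betw_def)
      then show "(?N *\<^sub>v v) $ r = 0\<^sub>v c $ r" using R[OF v r] T r by simp
    qed
  qed
  show ?thesis
    unfolding mat_kernel[OF car] using iff by blast
qed

lemma kdim_N:
  fixes N :: "complex mat"
  assumes N: "N \<in> carrier_mat c n"
  shows "n - c \<le> kernel_dim N"
proof -
  define G where "G = gauss_jordan_single N"
  have G: "G \<in> carrier_mat c n" and ref: "row_echelon_form G"
    using gauss_jordan_single(2,3)[OF N G_def[symmetric]] by auto
  have kd: "kernel_dim N = n - length (pivot_positions G)"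
    unfolding kernel_dim_code G_def using N by simp
  have "length (pivot_positions G) = card {i. i < c \<and> row G i \<noteq> 0\<^sub>v n}"
    by (rule find_base_vectors(5)[OF ref G])
  also have "\<dots> \<le> c"
  proof -
    have "{i. i < c \<and> row G i \<noteq> 0\<^sub>v n} \<subseteq> {..<c}" by auto
    then show ?thesis by (metis card_lessThan card_mono finite_lessThan)
  qed
  finally show ?thesis using kd diff_le_mono2 by simp
qed


lemma sum_list_min1: "sum_list (map (\<lambda>n. min 1 n) (map fst [(n, e)\<leftarrow>xs. e = ev]))
   \<le> sum_list (map fst (filter (\<lambda>na. snd na = ev) (xs :: (nat \<times> 'a) list)))"
  by (induction xs) auto

lemma mult_bound:
  assumes sg: "simple_graph n E" and cr: "clique_regular n E w"
    and d: "\<And>i. i < n \<Longrightarrow> card {C \<in> Cl n E w. i \<in> C} = d"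
  shows "n - card (Cl n E w) \<le> Polynomial.order (- real d) (char_poly (adj_matrix n E))"
proof -
  let ?A = "adj_matrix n E"
  let ?B = "map_mat complex_of_real ?A"
  let ?ev = "- (of_nat d :: complex)"
  let ?c = "card (Cl n E w)"
  obtain f where f: "bij_betw f {0..<?c} (Cl n E w)"
    using ex_bij_betw_nat_finite[OF fin_Cl] by blast
  let ?N = "mat ?c n (\<lambda>(r, i). if i \<in> f r then 1 else 0) :: complex mat"
  have kN: "n - ?c \<le> kernel_dim ?N" by (rule kdim_N) simp
  have keq: "kernel_dim (char_matrix ?B ?ev) = kernel_dim ?N"
  proof -
    have "dim_col (char_matrix ?B ?ev) = n" using carrier_matD(2)[OF cm_carrier[of n E ?ev]] .
    moreover have "dim_col ?N = n" by simp
    moreover have "mat_kernel (char_matrix ?B ?ev) = mat_kernel ?N"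
      using ker_M[OF sg cr d] ker_N[OF f] by simp
    ultimately show ?thesis unfolding kernel_dim_def by simp
  qed
  have Bc: "?B \<in> carrier_mat n n" by (simp add: adj_matrix_def)
  obtain as where "char_poly ?B = (\<Prod>a\<leftarrow>as. [:- a, 1:])"
    using char_poly_factorized[OF Bc] by blast
  from jordan_nf_exists[OF Bc this] obtain n_as where jnf: "jordan_nf ?B n_as" by blast
  have "char_matrix ?B ?ev ^\<^sub>m 1 = char_matrix ?B ?ev"
    using cm_carrier[of n E ?ev] by (simp add: pow_mat_ring_pow)
  then have "dim_gen_eigenspace ?B ?ev 1 = kernel_dim (char_matrix ?B ?ev)"
    by (simp add: dim_gen_eigenspace_def)
  also have "dim_gen_eigenspace ?B ?ev 1 = sum_list (map (\<lambda>n. min 1 n) (map fst [(n, e)\<leftarrow>n_as. e = ?ev]))"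
    by (rule dim_gen_eigenspace[OF jnf])
  finally have "n - ?c \<le> sum_list (map (\<lambda>n. min 1 n) (map fst [(n, e)\<leftarrow>n_as. e = ?ev]))"
    using kN keq by simp
  also have "\<dots> \<le> sum_list (map fst (filter (\<lambda>na. snd na = ?ev) n_as))"
    by (rule sum_list_min1)
  also have "\<dots> = Polynomial.order ?ev (char_poly ?B)"
    by (rule jordan_nf_order[OF jnf, symmetric])
  also have "char_poly ?B = map_poly complex_of_real (char_poly ?A)"
    by (rule of_real_hom.char_poly_hom[OF adj_carrier])
  also have "?ev = complex_of_real (- real d)" by simp
  also have "Polynomial.order (complex_of_real (- real d)) (map_poly complex_of_real (char_poly ?A))
     = Polynomial.order (- real d) (char_poly ?A)"
    by (rule ofr.order_hom)
  finally show ?thesis .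
qed


theorem corollary3:
  fixes n k \<omega> :: nat and E :: "nat \<Rightarrow> nat \<Rightarrow> bool" and lam1 :: real and a1 :: nat
  assumes "\<omega> \<ge> 2"
    and "simple_graph n E"
    and "k_regular n E k"
    and "clique_regular n E \<omega>"
    and "smallest_eigenvalue (adj_matrix n E) lam1"
    and "a1 = eig_multiplicity (adj_matrix n E) lam1"
  shows "lam1 \<ge> - real k / (real \<omega> - 1) \<and>
         (k < \<omega> * (\<omega> - 1) \<longrightarrow>
           lam1 = - real k / (real \<omega> - 1) \<and>
           real a1 \<ge> real n - real n * real k / (real \<omega> * (real \<omega> - 1)))"
proof -
  note w2 = assms(1) and sg = assms(2) and kr = assms(3) and cr = assms(4)
    and se = assms(5) and a1 = assms(6)
  let ?A = "adj_matrix n E"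
  let ?c = "card (Cl n E \<omega>)"
  define d where "d = k div (\<omega> - 1)"
  have w1: "\<omega> - 1 > 0" using w2 by simp
  have dd: "card {C \<in> Cl n E \<omega>. i \<in> C} = d" if i: "i < n" for i
    using vertex_count[OF sg kr cr i] w1 unfolding d_def by (metis nonzero_mult_div_cancel_right less_not_refl2)
  from cr obtain u0 where u0: "u0 < n" unfolding clique_regular_def by blast
  have dk: "d * (\<omega> - 1) = k" using vertex_count[OF sg kr cr u0] dd[OF u0] by simp
  have rw: "real \<omega> - 1 = real (\<omega> - 1)" using w2 by simp
  have rw1: "real \<omega> - 1 > 0" using w2 by simp
  have dreal: "real d = real k / (real \<omega> - 1)"
    using dk rw1 unfolding rw by (metis of_nat_mult nonzero_eq_divide_eq of_nat_0_less_iff w1 less_irrefl)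
  have cw: "?c * \<omega> = n * d"
    using double_count[of n E \<omega>] dd by simp
  have ev1: "eigenvalue ?A lam1" and minev: "\<And>mu. eigenvalue ?A mu \<Longrightarrow> lam1 \<le> mu"
    using se unfolding smallest_eigenvalue_def by auto
  have low: "- real d \<le> lam1" by (rule eig_lower[OF sg cr dd ev1])
  then have part1: "lam1 \<ge> - real k / (real \<omega> - 1)" using dreal by simp
  moreover have "lam1 = - real k / (real \<omega> - 1) \<and>
           real a1 \<ge> real n - real n * real k / (real \<omega> * (real \<omega> - 1))"
    if kw: "k < \<omega> * (\<omega> - 1)"
  proof -
    have "d < \<omega>" using kw dk w1 by (metis mult_less_cancel2)
    then have "?c * \<omega> < n * \<omega>" using cw u0 by simp
    then have cn: "?c < n" by simp
    have mb: "n - ?c \<le> Polynomial.order (- real d) (char_poly ?A)"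
      by (rule mult_bound[OF sg cr dd])
    then have "Polynomial.order (- real d) (char_poly ?A) \<noteq> 0" using cn by simp
    then have "poly (char_poly ?A) (- real d) = 0" using order_root by blast
    then have "eigenvalue ?A (- real d)"
      using eigenvalue_root_char_poly[OF adj_carrier] by blast
    then have "lam1 \<le> - real d" by (rule minev)
    with low have leq: "lam1 = - real d" by simp
    have "a1 = Polynomial.order (- real d) (char_poly ?A)"
      using a1 leq by (simp add: eig_multiplicity_def)
    with mb have "real n - real ?c \<le> real a1" using cn by linarith
    moreover have "real ?c = real n * real k / (real \<omega> * (real \<omega> - 1))"
    proof -
      have "real ?c * real \<omega> = real n * real d" using cw by (metis of_nat_mult)
      then have "real ?c = real n * real d / real \<omega>" using w2 by (simp add: field_simps)
      then show ?thesis using dreal by simp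
    qed
    ultimately show ?thesis using leq dreal by simp
  qed
  ultimately show ?thesis by blast
qed

end
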